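(* Let $0<\ell\le\infty$, $n\in\mathbb{N}$, $J=\begin{bmatrix}0&1\\-1&0\end{bmatrix}$. Let $\alpha$ be an $n\times n$ matrix, $g\in\mathbb{C}^n$, $\mu\in\mathbb{C}$ with $\overline\mu=-\mu$, $\det(\mu\alpha\pm I_n)\ne0$, $\det(\mu\alpha\pm\mathrm{i}I_n)\ne0$, and $A=\alpha^2$. Let $\Pi(x)=\begin{bmatrix}\Lambda_1(x)&\Lambda_2(x)\end{bmatrix}$ on $(-\ell,\ell)$ with for $x\ge0$: $\Lambda_1=-\mathrm{i}\alpha\big(\mathrm{e}^{\mathrm{i}x\alpha}(\mu\alpha+I_n)g-\mathrm{e}^{-\mathrm{i}x\alpha}(\mu\alpha-I_n)g\big)$, $\Lambda_2=\mathrm{e}^{\mathrm{i}x\alpha}(\mu\alpha+I_n)g+\mathrm{e}^{-\mathrm{i}x\alpha}(\mu\alpha-I_n)g$; for $x\le0$: $\Lambda_1=-\alpha\big(\mathrm{e}^{x\alpha}(\mu\alpha+\mathrm{i}I_n)g-\mathrm{e}^{-x\alpha}(\mu\alpha-\mathrm{i}I_n)g\big)$, $\Lambda_2=\mathrm{e}^{x\alpha}(\mu\alpha+\mathrm{i}I_n)g+\mathrm{e}^{-x\alpha}(\mu\alpha-\mathrm{i}I_n)g$; and $S(x)=\int_0^x\Lambda_2\Lambda_2^*dt$ ($x>0$), $S(x)=\int_x^0\Lambda_2\Lambda_2^*dt$ ($x<0$). Assume $\det S(x)\ne0$ for $x\ne0$. Let $X=J\Pi^*S^{-1}\Pi$ (entries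 $X_{ij}$), $w_A(x,\lambda)=I_2-J\Pi(x)^*S(x)^{-1}(A-\lambda I_n)^{-1}\Pi(x)$, and $y(x,\lambda)=T_+\mathrm{e}^{xD_+}T_+^{-1}h$ for $x>0$, $y=T_-\mathrm{e}^{xD_-}T_-^{-1}h$ for $x<0$, with $h\in\mathbb{C}^2$, $T_+=\begin{bmatrix}1&1\\\mathrm{i}\sqrt\lambda&-\mathrm{i}\sqrt\lambda\end{bmatrix}$, $D_+=\mathrm{diag}(\mathrm{i}\sqrt\lambda,-\mathrm{i}\sqrt\lambda)$, $T_-=\begin{bmatrix}1&1\\\sqrt\lambda&-\sqrt\lambda\end{bmatrix}$, $D_-=\mathrm{diag}(\sqrt\lambda,-\sqrt\lambda)$ ($\sqrt\lambda$ a fixed branch, $\lambda\ne0$ not an eigenvalue of $A$). Set $\widetilde y=w_Ay$. Then for $x\ne0$ the first entry $\widetilde y_1$ of $\widetilde y$ satisfies $$-\widetilde y_1''(x,\lambda)+\breve q(x)\widetilde y_1(x,\lambda)=\lambda\,\mathrm{sgn}(x)\,\widetilde y_1(x,\lambda),\qquad \breve q(x)=2\,\mathrm{sgn}(x)\big(X_{11}(x)-X_{22}(x)\big)+2X_{12}(x)^2.$$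
   Context: This is an indefinite Sturm-Liouville equation on $(-\ell,\ell)$ obtained by Darboux transformation of $-u''=\lambda\,\mathrm{sgn}(x)u$. *)

theory Defs
  imports "HOL-Analysis.Analysis"
begin

fun matpow :: "('a::semiring_1)^'n^'n \<Rightarrow> nat \<Rightarrow> 'a^'n^'n" where
  "matpow M 0 = mat 1"
| "matpow M (Suc k) = M ** matpow M k"

definition mexp :: "complex^'n^'n \<Rightarrow> complex^'n^'n" where
  "mexp M = (\<Sum>k. inverse (fact k :: real) *\<^sub>R matpow M k)"

definition cadj :: "complex^'n^'m \<Rightarrow> complex^'m^'n" where
  "cadj M = (\<chi> i j. cnj (M $ j $ i))"

definition outer :: "complex^'n \<Rightarrow> complex^'n^'n" where
  "outer v = (\<chi> i j. v $ i * cnj (v $ j))"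

definition Jmat :: "complex^2^2" where
  "Jmat = (\<chi> i j. if i = 1 \<and> j = 2 then 1 else if i = 2 \<and> j = 1 then -1 else 0)"

definition Lam1 :: "complex^'n^'n \<Rightarrow> complex \<Rightarrow> complex^'n \<Rightarrow> real \<Rightarrow> complex^'n" where
  "Lam1 \<alpha> \<mu> g x = (if 0 \<le> x then
      (- \<i>) *s (\<alpha> *v (mexp (mat (\<i> * of_real x) ** \<alpha>) *v ((mat \<mu> ** \<alpha> + mat 1) *v g)
                      - mexp (mat (- \<i> * of_real x) ** \<alpha>) *v ((mat \<mu> ** \<alpha> - mat 1) *v g)))
    else
      - (\<alpha> *v (mexp (mat (of_real x) ** \<alpha>) *v ((mat \<mu> ** \<alpha> + mat \<i>) *v g)
               - mexp (mat (- of_real x) ** \<alpha>) *v ((mat \<mu> ** \<alpha> - mat \<i>) *v g))))"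

definition Lam2 :: "complex^'n^'n \<Rightarrow> complex \<Rightarrow> complex^'n \<Rightarrow> real \<Rightarrow> complex^'n" where
  "Lam2 \<alpha> \<mu> g x = (if 0 \<le> x then
      mexp (mat (\<i> * of_real x) ** \<alpha>) *v ((mat \<mu> ** \<alpha> + mat 1) *v g)
      + mexp (mat (- \<i> * of_real x) ** \<alpha>) *v ((mat \<mu> ** \<alpha> - mat 1) *v g)
    else
      mexp (mat (of_real x) ** \<alpha>) *v ((mat \<mu> ** \<alpha> + mat \<i>) *v g)
      + mexp (mat (- of_real x) ** \<alpha>) *v ((mat \<mu> ** \<alpha> - mat \<i>) *v g))"

definition PiM :: "complex^'n^'n \<Rightarrow> complex \<Rightarrow> complex^'n \<Rightarrow> real \<Rightarrow> complex^2^'n" where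
  "PiM \<alpha> \<mu> g x = (\<chi> i k. if k = 1 then Lam1 \<alpha> \<mu> g x $ i else Lam2 \<alpha> \<mu> g x $ i)"

definition SM :: "complex^'n^'n \<Rightarrow> complex \<Rightarrow> complex^'n \<Rightarrow> real \<Rightarrow> complex^'n^'n" where
  "SM \<alpha> \<mu> g x = (if 0 \<le> x then integral {0..x} (\<lambda>t. outer (Lam2 \<alpha> \<mu> g t))
                   else integral {x..0} (\<lambda>t. outer (Lam2 \<alpha> \<mu> g t)))"

definition XM :: "complex^'n^'n \<Rightarrow> complex \<Rightarrow> complex^'n \<Rightarrow> real \<Rightarrow> complex^2^2" where
  "XM \<alpha> \<mu> g x = Jmat ** cadj (PiM \<alpha> \<mu> g x) ** matrix_inv (SM \<alpha> \<mu> g x) ** PiM \<alpha> \<mu> g x"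

definition wA :: "complex^'n^'n \<Rightarrow> complex \<Rightarrow> complex^'n \<Rightarrow> complex \<Rightarrow> real \<Rightarrow> complex^2^2" where
  "wA \<alpha> \<mu> g lam x = mat 1 - Jmat ** cadj (PiM \<alpha> \<mu> g x) ** matrix_inv (SM \<alpha> \<mu> g x)
        ** matrix_inv (\<alpha> ** \<alpha> - mat lam) ** PiM \<alpha> \<mu> g x"

text \<open>y(x,lambda); s is the fixed branch of sqrt lambda.\<close>
definition Tp :: "complex \<Rightarrow> complex^2^2" where
  "Tp s = (\<chi> i j. if i = 1 then 1 else (if j = 1 then \<i> * s else - \<i> * s))"
definition Dp :: "complex \<Rightarrow> complex^2^2" where
  "Dp s = (\<chi> i j. if i = j then (if i = 1 then \<i> * s else - \<i> * s) else 0)"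
definition Tm :: "complex \<Rightarrow> complex^2^2" where
  "Tm s = (\<chi> i j. if i = 1 then 1 else (if j = 1 then s else - s))"
definition Dm :: "complex \<Rightarrow> complex^2^2" where
  "Dm s = (\<chi> i j. if i = j then (if i = 1 then s else - s) else 0)"

definition yv :: "complex \<Rightarrow> complex^2 \<Rightarrow> real \<Rightarrow> complex^2" where
  "yv s h x = (if 0 < x then (Tp s ** mexp (mat (of_real x) ** Dp s) ** matrix_inv (Tp s)) *v h
               else (Tm s ** mexp (mat (of_real x) ** Dm s) ** matrix_inv (Tm s)) *v h)"

definition ytil :: "complex^'n^'n \<Rightarrow> complex \<Rightarrow> complex^'n \<Rightarrow> complex \<Rightarrow> complex \<Rightarrow> complex^2 \<Rightarrow> real \<Rightarrow> complex^2" where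
  "ytil \<alpha> \<mu> g lam s h x = wA \<alpha> \<mu> g lam x *v yv s h x"

definition qbreve :: "complex^'n^'n \<Rightarrow> complex \<Rightarrow> complex^'n \<Rightarrow> real \<Rightarrow> complex" where
  "qbreve \<alpha> \<mu> g x = 2 * of_real (sgn x) * (XM \<alpha> \<mu> g x $ 1 $ 1 - XM \<alpha> \<mu> g x $ 2 $ 2)
                     + 2 * (XM \<alpha> \<mu> g x $ 1 $ 2)^2"

end

theory Submission
  imports Defs
begin

typedef (overloaded) 'a endo = "UNIV :: ('a::euclidean_space \<Rightarrow>\<^sub>L 'a) set"
  morphisms Rep_endo Abs_endo by auto
setup_lifting type_definition_endo

instantiation endo :: (euclidean_space) real_normed_algebra_1
begin
lift_definition zero_endo :: "'a endo" is 0 .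
lift_definition one_endo :: "'a endo" is id_blinfun .
lift_definition plus_endo :: "'a endo \<Rightarrow> 'a endo \<Rightarrow> 'a endo" is "(+)" .
lift_definition minus_endo :: "'a endo \<Rightarrow> 'a endo \<Rightarrow> 'a endo" is "(-)" .
lift_definition uminus_endo :: "'a endo \<Rightarrow> 'a endo" is uminus .
lift_definition times_endo :: "'a endo \<Rightarrow> 'a endo \<Rightarrow> 'a endo" is "(o\<^sub>L)" .
lift_definition scaleR_endo :: "real \<Rightarrow> 'a endo \<Rightarrow> 'a endo" is scaleR .
lift_definition norm_endo :: "'a endo \<Rightarrow> real" is norm .
definition dist_endo :: "'a endo \<Rightarrow> 'a endo \<Rightarrow> real" where "dist_endo a b = norm (a - b)"
definition sgn_endo :: "'a endo \<Rightarrow> 'a endo" where "sgn_endo x = scaleR (inverse (norm x)) x"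
definition uniformity_endo :: "('a endo \<times> 'a endo) filter" where
  "uniformity_endo = (INF e\<in>{0 <..}. principal {(x, y). dist x y < e})"
definition open_endo :: "'a endo set \<Rightarrow> bool"
  where "open_endo S = (\<forall>x\<in>S. \<forall>\<^sub>F (x', y) in uniformity. x' = x \<longrightarrow> y \<in> S)"
instance
  apply standard
  unfolding dist_endo_def sgn_endo_def uniformity_endo_def open_endo_def
  apply (transfer, simp add: algebra_simps)
  apply (transfer, simp add: algebra_simps)
  apply (transfer, simp add: algebra_simps)
  apply (transfer, simp add: algebra_simps)
  apply (transfer, simp add: algebra_simps)
  apply (transfer, simp add: algebra_simps)
  apply (transfer, simp add: algebra_simps)
  apply (transfer, simp add: algebra_simps)
  apply (transfer, simp add: algebra_simps)
  apply (transfer, rule blinfun_eqI, simp add: blinfun.bilinear_simps)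
  apply (transfer, rule blinfun_eqI, simp add: blinfun.bilinear_simps)
  apply (transfer, rule blinfun_eqI, simp add: blinfun.bilinear_simps)
  apply (transfer, rule blinfun_eqI, simp add: blinfun.bilinear_simps)
  apply (transfer, rule blinfun_eqI, simp add: blinfun.bilinear_simps)
  apply (transfer, rule blinfun_eqI, simp add: blinfun.bilinear_simps)
  apply (transfer, rule blinfun_eqI, simp)
  apply transfer
  apply (rule notI, drule arg_cong[where f="\<lambda>f. blinfun_apply f (SOME i. i \<in> Basis)"], simp add: SOME_Basis nonzero_Basis)
  apply (rule refl)
  apply (rule refl)
  apply (rule refl)
  apply (rule refl)
  apply (transfer, simp)
  apply (transfer, rule norm_triangle_ineq)
  apply (transfer, simp)
  apply (transfer, rule norm_blinfun_compose)
  apply (transfer, rule norm_blinfun_id)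
  done
end

instance endo :: (euclidean_space) banach
proof
  fix X :: "nat \<Rightarrow> 'a endo" assume "Cauchy X"
  hence "Cauchy (\<lambda>n. Rep_endo (X n))"
    by (simp add: Cauchy_def dist_norm norm_endo.rep_eq minus_endo.rep_eq dist_endo_def)
  then obtain l where "(\<lambda>n. Rep_endo (X n)) \<longlonglongrightarrow> l"
    using Cauchy_convergent_iff convergent_def by blast
  hence "X \<longlonglongrightarrow> Abs_endo l"
    by (simp add: tendsto_iff dist_norm norm_endo.rep_eq minus_endo.rep_eq Abs_endo_inverse dist_endo_def)
  thus "convergent X" by (auto simp: convergent_def)
qed

lemma mv_scaleR: "(M::complex^'n^'m) *v (r *\<^sub>R v) = r *\<^sub>R (M *v v)"
  by (simp add: vec_eq_iff matrix_vector_mult_def scaleR_sum_right)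

lemma mv_scaleR_left: "((r *\<^sub>R M)::complex^'n^'m) *v v = r *\<^sub>R (M *v v)"
  by (simp add: vec_eq_iff matrix_vector_mult_def scaleR_sum_right)

lemma bl_mv: "bounded_linear (\<lambda>v::complex^'n. (M::complex^'n^'m) *v v)"
  unfolding linear_conv_bounded_linear[symmetric]
  by (rule linearI) (simp_all add: matrix_vector_right_distrib mv_scaleR)

lemma bl_mv_left: "bounded_linear (\<lambda>M::complex^'n^'m. M *v (v::complex^'n))"
  unfolding linear_conv_bounded_linear[symmetric]
  by (rule linearI) (simp_all add: matrix_vector_mult_add_rdistrib mv_scaleR_left)

definition phi :: "complex^'n^'n \<Rightarrow> (complex^'n) endo" where
  "phi M = Abs_endo (Blinfun (\<lambda>v. M *v v))"

lemma Rep_phi: "blinfun_apply (Rep_endo (phi M)) v = M *v v"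
  by (simp add: phi_def Abs_endo_inverse bounded_linear_Blinfun_apply[OF bl_mv])

lemma endo_eqI: "(\<And>v. blinfun_apply (Rep_endo E) v = blinfun_apply (Rep_endo F) v) \<Longrightarrow> E = F"
  by (simp add: Rep_endo_inject[symmetric] blinfun_eqI)

lemma phi_mult: "phi (M ** N) = phi M * phi N"
  by (rule endo_eqI) (simp add: times_endo.rep_eq Rep_phi matrix_vector_mul_assoc)

lemma phi_one: "phi (mat 1) = 1"
  by (rule endo_eqI) (simp add: one_endo.rep_eq Rep_phi)

lemma phi_zero: "phi 0 = 0"
  by (rule endo_eqI) (simp add: zero_endo.rep_eq Rep_phi)

lemma phi_scaleR: "phi (r *\<^sub>R M) = r *\<^sub>R phi M"
  by (rule endo_eqI) (simp add: scaleR_endo.rep_eq Rep_phi mv_scaleR_left blinfun.scaleR_left)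

lemma phi_pow: "phi (matpow M k) = (phi M) ^ k"
  by (induction k) (simp_all add: phi_one phi_mult)

definition psi :: "(complex^'n) endo \<Rightarrow> complex^'n^'n" where
  "psi E = (\<chi> i j. blinfun_apply (Rep_endo E) (axis j 1) $ i)"

lemma mv_axis: "((M::complex^'n^'m) *v axis j 1) $ i = M $ i $ j"
  by (simp add: matrix_vector_mult_def axis_def if_distrib cong: if_cong)

lemma psi_phi: "psi (phi M) = M"
  by (simp add: psi_def Rep_phi mv_axis vec_eq_iff)

lemma psi_mult_phi: "psi (phi B * E) = B ** psi E"
  by (simp add: psi_def vec_eq_iff times_endo.rep_eq Rep_phi matrix_matrix_mult_def matrix_vector_mult_def)

lemma norm_le_l1_vec: "norm (x::'a::real_normed_vector^'n) \<le> (\<Sum>i\<in>UNIV. norm (x $ i))"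
  unfolding norm_vec_def by (rule L2_set_le_sum) simp

lemma psi_add: "psi (E + F) = psi E + psi F"
  by (simp add: psi_def vec_eq_iff plus_endo.rep_eq blinfun.add_left)
lemma psi_scaleR: "psi (r *\<^sub>R E) = r *\<^sub>R psi E"
  by (simp add: psi_def vec_eq_iff scaleR_endo.rep_eq blinfun.scaleR_left)

lemma norm_axis_c: "norm (axis m (1::complex)) = 1"
  by (simp add: inner_axis' norm_eq_1)

lemma bl_psi: "bounded_linear (psi :: (complex^'n) endo \<Rightarrow> complex^'n^'n)"
proof (rule bounded_linear_intro[where K = "real CARD('n) * real CARD('n)"])
  fix E F :: "(complex^'n) endo" and r :: real
  show "psi (E + F) = psi E + psi F"
    by (rule psi_add)
  show "psi (r *\<^sub>R E) = r *\<^sub>R psi E"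
    by (rule psi_scaleR)
  have "norm (psi E) \<le> (\<Sum>i\<in>UNIV. norm (psi E $ i))" by (rule norm_le_l1_vec)
  also have "\<dots> \<le> (\<Sum>i\<in>(UNIV::'n set). \<Sum>j\<in>(UNIV::'n set). norm (psi E $ i $ j))"
    by (intro sum_mono norm_le_l1_vec)
  also have "\<dots> \<le> (\<Sum>i\<in>(UNIV::'n set). \<Sum>j\<in>(UNIV::'n set). norm E)"
  proof (intro sum_mono)
    fix i j :: 'n
    have "norm (psi E $ i $ j) \<le> norm (blinfun_apply (Rep_endo E) (axis j 1))"
      unfolding psi_def by (simp add: Finite_Cartesian_Product.norm_nth_le)
    also have "\<dots> \<le> norm (Rep_endo E) * norm (axis j (1::complex))" by (rule norm_blinfun)
    also have "\<dots> = norm E" by (simp add: norm_endo.rep_eq norm_axis_c)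
    finally show "norm (psi E $ i $ j) \<le> norm E" .
  qed
  also have "\<dots> = norm E * (real CARD('n) * real CARD('n))" by simp
  finally show "norm (psi E) \<le> norm E * (real CARD('n) * real CARD('n))" .
qed

lemma mexp_psi: "mexp M = psi (exp (phi M))"
proof -
  have "(\<lambda>n. (phi M) ^ n /\<^sub>R fact n) sums exp (phi M)"
    unfolding exp_def by (rule summable_sums[OF summable_exp_generic])
  from bounded_linear.sums[OF bl_psi this]
  have "(\<lambda>n. inverse (fact n :: real) *\<^sub>R matpow M n) sums psi (exp (phi M))"
    by (simp add: psi_scaleR phi_pow[symmetric] psi_phi)
  thus ?thesis unfolding mexp_def by (rule sums_unique[symmetric])
qed

lemma mexp_zero: "mexp (0::complex^'n^'n) = mat 1"
  by (simp add: mexp_psi phi_zero phi_one[symmetric] psi_phi)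

lemma mexp_vd:
  "((\<lambda>t. mexp (t *\<^sub>R B) *v w) has_vector_derivative (B *v (mexp (t *\<^sub>R B) *v w))) (at t within T)"
proof -
  have bl: "bounded_linear (\<lambda>E. psi E *v w)"
    using bounded_linear_compose[OF bl_mv_left bl_psi] .
  have "((\<lambda>t. psi (exp (t *\<^sub>R phi B)) *v w) has_vector_derivative psi (phi B * exp (t *\<^sub>R phi B)) *v w) (at t within T)"
    by (rule bounded_linear.has_vector_derivative[OF bl has_vector_derivative_at_within[OF exp_scaleR_has_vector_derivative_left]])
  thus ?thesis
    by (simp add: mexp_psi phi_scaleR psi_mult_phi matrix_vector_mul_assoc)
qed

lemma mat_mult_entry: "(mat a ** (M::'a::semiring_1^'n^'m)) $ i $ j = a * M $ i $ j"
proof -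
  have "(mat a ** M) $ i $ j = (\<Sum>k\<in>UNIV. (if i = k then a else 0) * M $ k $ j)"
    by (simp add: matrix_matrix_mult_def mat_def)
  also have "\<dots> = (\<Sum>k\<in>UNIV. (if k = i then a * M $ k $ j else 0))"
    by (rule sum.cong) auto
  finally have "(mat a ** M) $ i $ j = (\<Sum>k\<in>UNIV. (if k = i then a * M $ k $ j else 0))" .
  thus ?thesis by simp
qed

lemma mat_scal: "mat (c * of_real x) ** (M::complex^'n^'m) = x *\<^sub>R (mat c ** M)"
  by (simp add: vec_eq_iff mat_mult_entry) (simp add: scaleR_conv_of_real)

lemma mat_scal1: "mat (of_real x) ** (M::complex^'n^'m) = x *\<^sub>R M"
  using mat_scal[of 1 x M] by simp

definition cdot :: "complex^'n \<Rightarrow> complex^'n \<Rightarrow> complex" where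
  "cdot u v = (\<Sum>i\<in>UNIV. cnj (u $ i) * v $ i)"

definition op2 :: "complex^'n \<Rightarrow> complex^'n \<Rightarrow> complex^'n^'n" where
  "op2 a b = (\<chi> i j. a $ i * cnj (b $ j))"

lemma bb_cdot: "bounded_bilinear (cdot :: complex^'n \<Rightarrow> _)"
  unfolding bilinear_conv_bounded_bilinear[symmetric] bilinear_def
  by (auto intro!: linearI sum.cong simp: cdot_def sum.distrib algebra_simps scaleR_conv_of_real[where 'a=complex] sum_distrib_left)

lemma bb_op2: "bounded_bilinear (op2 :: complex^'n \<Rightarrow> _)"
  unfolding bilinear_conv_bounded_bilinear[symmetric] bilinear_def
  by (auto intro!: linearI simp: op2_def vec_eq_iff algebra_simps scaleR_conv_of_real[where 'a=complex])

lemma bb_mm: "bounded_bilinear ((**) :: complex^'n^'m \<Rightarrow> complex^'k^'n \<Rightarrow> _)"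
  unfolding bilinear_conv_bounded_bilinear[symmetric] bilinear_def
  by (auto intro!: linearI simp: matrix_matrix_mult_def vec_eq_iff algebra_simps scaleR_conv_of_real[where 'a=complex]
     sum.distrib sum_distrib_left intro!: sum.cong)

lemma bb_mv: "bounded_bilinear ((*v) :: complex^'n^'m \<Rightarrow> complex^'n \<Rightarrow> _)"
  unfolding bilinear_conv_bounded_bilinear[symmetric] bilinear_def
  by (auto intro!: linearI simp: matrix_vector_mult_def vec_eq_iff algebra_simps scaleR_conv_of_real[where 'a=complex]
     sum.distrib sum_distrib_left intro!: sum.cong)

lemma bb_smult: "bounded_bilinear ((*s) :: complex \<Rightarrow> complex^'n \<Rightarrow> _)"
  unfolding bilinear_conv_bounded_bilinear[symmetric] bilinear_def
  by (auto intro!: linearI simp: vec_eq_iff algebra_simps scaleR_conv_of_real[where 'a=complex])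

definition emb :: "'n \<Rightarrow> 'a::real_normed_vector \<Rightarrow> 'a^'n" where
  "emb i a = (\<chi> j. if j = i then a else 0)"

lemma bl_emb: "bounded_linear (emb i :: 'a::real_normed_vector \<Rightarrow> 'a^'n)"
proof (rule bounded_linear_intro[where K=1])
  fix a b :: 'a and r :: real
  show "emb i (a + b) = (emb i a + emb i b :: 'a^'n)" by (simp add: emb_def vec_eq_iff)
  show "emb i (r *\<^sub>R a) = (r *\<^sub>R emb i a :: 'a^'n)" by (simp add: emb_def vec_eq_iff)
  have "norm (emb i a :: 'a^'n) \<le> (\<Sum>j\<in>UNIV. norm ((emb i a :: 'a^'n) $ j))" by (rule norm_le_l1_vec)
  also have "\<dots> = (\<Sum>j\<in>UNIV. if j = i then norm a else 0)"
    by (rule sum.cong) (auto simp: emb_def)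
  finally show "norm (emb i a :: 'a^'n) \<le> norm a * 1" by simp
qed

lemma vec_vd:
  fixes f :: "real \<Rightarrow> 'a::real_normed_vector^'n"
  assumes "\<And>i. ((\<lambda>t. f t $ i) has_vector_derivative D $ i) F"
  shows "(f has_vector_derivative D) F"
proof -
  have e: "\<And>g::'a^'n. g = (\<Sum>i\<in>UNIV. emb i (g $ i))"
    by (simp add: vec_eq_iff emb_def)
  have "((\<lambda>t. \<Sum>i\<in>UNIV. emb i (f t $ i)) has_vector_derivative (\<Sum>i\<in>UNIV. emb i (D $ i))) F"
    by (intro has_vector_derivative_sum bounded_linear.has_vector_derivative[OF bl_emb] assms)
  thus ?thesis using e[of D] e[symmetric] by simp
qed

lemma vd_nth: "(f has_vector_derivative D) F \<Longrightarrow> ((\<lambda>t. f t $ i) has_vector_derivative D $ i) F"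
  by (rule bounded_linear.has_vector_derivative[OF bounded_linear_vec_nth])

lemma matrix_inv_both:
  fixes A :: "'a::field^'n^'n"
  assumes "det A \<noteq> 0"
  shows "A ** matrix_inv A = mat 1" "matrix_inv A ** A = mat 1"
proof -
  have "\<exists>A'. A ** A' = mat 1 \<and> A' ** A = mat 1"
    using assms invertible_det_nz invertible_def by blast
  hence "A ** matrix_inv A = mat 1 \<and> matrix_inv A ** A = mat 1"
    unfolding matrix_inv_def by (rule someI_ex)
  thus "A ** matrix_inv A = mat 1" "matrix_inv A ** A = mat 1" by auto
qed

lemma differentiable_prod':
  fixes f :: "'i \<Rightarrow> real \<Rightarrow> 'b::real_normed_field"
  assumes "\<And>i. i \<in> I \<Longrightarrow> f i differentiable (at x)"
  shows "(\<lambda>t. \<Prod>i\<in>I. f i t) differentiable (at x)"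
proof -
  from assms obtain D where "\<And>i. i \<in> I \<Longrightarrow> (f i has_derivative D i) (at x)"
    unfolding differentiable_def by metis
  thus ?thesis unfolding differentiable_def by (blast intro: has_derivative_prod)
qed

lemma det_differentiable:
  fixes N :: "real \<Rightarrow> complex^'n^'n"
  assumes "\<And>a b. (\<lambda>t. N t $ a $ b) differentiable (at x)"
  shows "(\<lambda>t. det (N t)) differentiable (at x)"
  unfolding det_def
proof (rule differentiable_sum)
  show "finite {p. p permutes (UNIV::'n set)}" by (simp add: finite_permutations)
  show "\<forall>p\<in>{p. p permutes UNIV}. (\<lambda>t. of_int (sign p) * (\<Prod>i\<in>UNIV. N t $ i $ p i)) differentiable (at x)"
    by (intro ballI differentiable_mult differentiable_const differentiable_prod' assms)
qed

lemma cramer_inv: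
  fixes A :: "complex^'n^'n"
  assumes "det A \<noteq> 0"
  shows "matrix_inv A $ i $ j = det (\<chi> a b. if b = i then axis j 1 $ a else A $ a $ b) / det A"
proof -
  have "A *v (matrix_inv A *v axis j 1) = axis j 1"
    by (simp add: matrix_vector_mul_assoc matrix_inv_both[OF assms])
  hence "matrix_inv A *v axis j 1 = (\<chi> k. det (\<chi> a b. if b = k then axis j 1 $ a else A $ a $ b) / det A)"
    using cramer[OF assms] by blast
  hence "(matrix_inv A *v axis j 1) $ i = det (\<chi> a b. if b = i then axis j 1 $ a else A $ a $ b) / det A"
    by simp
  thus ?thesis by (simp add: mv_axis)
qed

lemma inv_vd:
  fixes M :: "real \<Rightarrow> complex^'n^'n"
  assumes MD: "(M has_vector_derivative M') (at x)" and d0: "det (M x) \<noteq> 0"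
  shows "((\<lambda>t. matrix_inv (M t)) has_vector_derivative
            - (matrix_inv (M x) ** M' ** matrix_inv (M x))) (at x)"
proof -
  have ent: "\<And>a b. (\<lambda>t. M t $ a $ b) differentiable (at x)"
    using differentiableI_vector[OF vd_nth[OF vd_nth[OF MD]]] .
  have ddet: "(\<lambda>t. det (M t)) differentiable (at x)"
    by (rule det_differentiable[OF ent])
  hence cc: "continuous (at x) (\<lambda>t. det (M t))"
    by (rule differentiable_imp_continuous_within)
  obtain e where e: "e > 0" "\<And>y. dist x y < e \<Longrightarrow> det (M y) \<noteq> 0"
    using continuous_at_avoid[of x "\<lambda>t. det (M t)" 0, OF cc d0] by blast
  let ?B = "ball x e"
  have xB: "x \<in> ?B" using e by simp
  have dB: "\<And>t. t \<in> ?B \<Longrightarrow> det (M t) \<noteq> 0" using e by (simp add: dist_commute)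
  have cr: "\<And>i j. (\<lambda>t. det (\<chi> a b. if b = i then axis j 1 $ a else M t $ a $ b) / det (M t))
              differentiable (at x)"
    apply (intro differentiable_divide det_differentiable ddet d0)
    subgoal for i j a b by (cases "b = i") (simp_all add: ent)
    by (fact ent)
  define d where "d i j = vector_derivative (\<lambda>t. det (\<chi> a b. if b = i then axis j 1 $ a else M t $ a $ b) / det (M t)) (at x)" for i j
  have de: "((\<lambda>t. matrix_inv (M t) $ i $ j) has_vector_derivative d i j) (at x)" for i j
  proof -
    have "((\<lambda>t. det (\<chi> a b. if b = i then axis j 1 $ a else M t $ a $ b) / det (M t))
            has_vector_derivative d i j) (at x)"
      unfolding d_def using cr[of i j] vector_derivative_works by blast
    thus ?thesis
      by (rule has_vector_derivative_transform_within_open[OF _ open_ball xB])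
         (simp add: cramer_inv dB)
  qed
  define N' where "N' = (\<chi> i j. d i j)"
  have ND: "((\<lambda>t. matrix_inv (M t)) has_vector_derivative N') (at x)"
    unfolding N'_def by (intro vec_vd) (simp add: de)
  have "((\<lambda>t. M t ** matrix_inv (M t)) has_vector_derivative M x ** N' + M' ** matrix_inv (M x)) (at x)"
    by (rule bounded_bilinear.has_vector_derivative[OF bb_mm MD ND])
  moreover have "((\<lambda>t. M t ** matrix_inv (M t)) has_vector_derivative 0) (at x)"
    by (rule has_vector_derivative_transform_within_open[OF has_vector_derivative_const open_ball xB])
       (simp add: matrix_inv_both dB)
  ultimately have z: "M x ** N' + M' ** matrix_inv (M x) = 0"
    by (rule vector_derivative_unique_at)
  have "N' = matrix_inv (M x) ** (M x ** N')"
    by (simp add: matrix_mul_assoc matrix_inv_both[OF d0])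
  also have "M x ** N' = - (M' ** matrix_inv (M x))"
    using z by (simp add: eq_neg_iff_add_eq_0)
  finally have "N' = - (matrix_inv (M x) ** M' ** matrix_inv (M x))"
    by (simp add: matrix_mul_assoc bounded_bilinear.minus_right[OF bb_mm])
  with ND show ?thesis by simp
qed

lemma has_vd_eq: "(f has_vector_derivative a) F \<Longrightarrow> a = b \<Longrightarrow> (f has_vector_derivative b) F"
  by simp

lemma mv_smult: "(M::complex^'n^'m) *v (c *s v) = c *s (M *v v)"
  by (simp add: vec_eq_iff matrix_vector_mult_def sum_distrib_left algebra_simps)

lemma mat_mv: "mat c *v (v::complex^'n) = c *s v"
proof -
  have "(mat c *v v) $ i = (c *s v) $ i" for i
  proof -
    have "(mat c *v v) $ i = (\<Sum>k\<in>UNIV. (if i = k then c else 0) * v $ k)"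
      by (simp add: matrix_vector_mult_def mat_def)
    also have "\<dots> = (\<Sum>k\<in>UNIV. (if k = i then c * v $ k else 0))"
      by (rule sum.cong) auto
    finally show ?thesis by simp
  qed
  thus ?thesis by (simp add: vec_eq_iff)
qed

lemma cdot_smult_r: "cdot u (c *s v) = c * cdot u v"
  by (simp add: cdot_def sum_distrib_left algebra_simps)

lemma cdot_smult_l: "cdot (c *s u) v = cnj c * cdot u v"
  by (simp add: cdot_def sum_distrib_left algebra_simps)

lemma cdot_adj: "cdot ((M::complex^'n^'n) *v u) v = cdot u (cadj M *v v)"
  by (simp add: cdot_def cadj_def matrix_vector_mult_def sum_distrib_left sum_distrib_right
      algebra_simps) (rule sum.swap)

lemma op2_mv: "op2 a b *v w = cdot b w *s a"
  by (simp add: vec_eq_iff op2_def cdot_def matrix_vector_mult_def sum_distrib_left algebra_simps)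

lemma scaleR_mv: "(r *\<^sub>R (M::complex^'n^'m)) *v w = complex_of_real r *s (M *v w)"
  by (simp add: vec_eq_iff matrix_vector_mult_def sum_distrib_left scaleR_conv_of_real[where 'a=complex] algebra_simps)

lemmas cdot_simps = bounded_bilinear.add_left[OF bb_cdot] bounded_bilinear.add_right[OF bb_cdot]
  bounded_bilinear.diff_left[OF bb_cdot] bounded_bilinear.diff_right[OF bb_cdot]
  bounded_bilinear.minus_left[OF bb_cdot] bounded_bilinear.minus_right[OF bb_cdot]
  cdot_smult_r cdot_smult_l

lemmas mv_simps = bounded_bilinear.add_left[OF bb_mv] bounded_bilinear.add_right[OF bb_mv]
  bounded_bilinear.diff_left[OF bb_mv] bounded_bilinear.diff_right[OF bb_mv]
  bounded_bilinear.minus_left[OF bb_mv] bounded_bilinear.minus_right[OF bb_mv]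
  mv_smult scaleR_mv op2_mv matrix_vector_mul_assoc[symmetric] mat_mv

lemma side_ode:
  fixes L1 L2 :: "real \<Rightarrow> complex^'n" and S :: "real \<Rightarrow> complex^'n^'n"
    and y1 y2 :: "real \<Rightarrow> complex" and A R :: "complex^'n^'n" and \<sigma> :: real and lam :: complex
  assumes sig: "\<sigma> = 1 \<or> \<sigma> = -1"
    and dL1: "(L1 has_vector_derivative (complex_of_real \<sigma> *s (A *v L2 x))) (at x)"
    and dL2: "(L2 has_vector_derivative - L1 x) (at x)"
    and dS: "(S has_vector_derivative \<sigma> *\<^sub>R op2 (L2 x) (L2 x)) (at x)"
    and dy1: "(y1 has_vector_derivative y2 x) (at x)"
    and dy2: "(y2 has_vector_derivative - (complex_of_real \<sigma> * lam * y1 x)) (at x)"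
    and d0: "det (S x) \<noteq> 0"
    and idS: "A ** S x - S x ** cadj A = op2 (L1 x) (L2 x) - op2 (L2 x) (L1 x)"
    and R1: "R ** (A - mat lam) = mat 1"
    and R2: "(A - mat lam) ** R = mat 1"
  assumes ps_def: "ps = (\<lambda>t. matrix_inv (S t) *v (R *v (y1 t *s L1 t + y2 t *s L2 t)))"
    and yt_def: "yt = (\<lambda>t. y1 t - cdot (L2 t) (ps t))"
    and X11_def: "X11 = (\<lambda>t. cdot (L2 t) (matrix_inv (S t) *v L1 t))"
    and X12_def: "X12 = (\<lambda>t. cdot (L2 t) (matrix_inv (S t) *v L2 t))"
    and X22_def: "X22 = (\<lambda>t. - cdot (L1 t) (matrix_inv (S t) *v L2 t))"
    and d1_def: "d1 = (\<lambda>t. y2 t + cdot (L1 t) (ps t) - complex_of_real \<sigma> * X12 t * yt t)"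
  shows "(yt has_vector_derivative d1 x) (at x) \<and>
    (\<exists>D. (d1 has_vector_derivative D) (at x) \<and>
      - D + (2 * complex_of_real \<sigma> * (X11 x - X22 x) + 2 * X12 x ^ 2) * yt x
        = lam * complex_of_real \<sigma> * yt x)"
proof -
  define s where "s = complex_of_real \<sigma>"
  define Si where "Si = matrix_inv (S x)"
  define l1 where "l1 = L1 x"
  define l2 where "l2 = L2 x"
  define F where "F = (\<lambda>t. y1 t *s L1 t + y2 t *s L2 t)"
  have ss: "s * s = 1" using sig by (auto simp: s_def)
  have cs: "cnj s = s" by (simp add: s_def)
  have SiSv: "\<And>w. Si *v (S x *v w) = w"
    by (simp add: Si_def matrix_vector_mul_assoc matrix_inv_both[OF d0])
  have SSiv: "\<And>w. S x *v (Si *v w) = w"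
    by (simp add: Si_def matrix_vector_mul_assoc matrix_inv_both[OF d0])
  have ARv: "\<And>w. A *v (R *v w) = w + lam *s (R *v w)"
  proof -
    fix w
    have "((A - mat lam) ** R) *v w = w" by (simp add: R2)
    thus "A *v (R *v w) = w + lam *s (R *v w)"
      by (simp add: mv_simps algebra_simps)
  qed
  have RAv: "\<And>w. R *v ((A - mat lam) *v w) = w"
    by (simp add: matrix_vector_mul_assoc R1)
  have dSi: "((\<lambda>t. matrix_inv (S t)) has_vector_derivative - (Si ** (\<sigma> *\<^sub>R op2 l2 l2) ** Si)) (at x)"
    unfolding Si_def l2_def by (rule inv_vd[OF dS d0])
  have dF: "(F has_vector_derivative (s * y1 x) *s ((A - mat lam) *v l2)) (at x)"
    unfolding F_def
    by (rule has_vd_eq[OF has_vector_derivative_add[OF bounded_bilinear.has_vector_derivative[OF bb_smult dy1 dL1]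
        bounded_bilinear.has_vector_derivative[OF bb_smult dy2 dL2]]])
      (simp add: vec_eq_iff mv_simps algebra_simps s_def l2_def)
  have dv: "((\<lambda>t. R *v F t) has_vector_derivative (s * y1 x) *s l2) (at x)"
    by (rule has_vd_eq[OF bounded_linear.has_vector_derivative[OF bl_mv dF]])
      (simp add: mv_smult RAv)
  have psF: "ps = (\<lambda>t. matrix_inv (S t) *v (R *v F t))"
    by (simp add: ps_def F_def)
  have dps: "(ps has_vector_derivative (s * yt x) *s (Si *v l2)) (at x)"
    unfolding psF
    by (rule has_vd_eq[OF bounded_bilinear.has_vector_derivative[OF bb_mv dSi dv]])
      (simp add: vec_eq_iff mv_simps algebra_simps yt_def psF Si_def l2_def s_def)
  have dyt: "(yt has_vector_derivative d1 x) (at x)"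
    unfolding yt_def[abs_def]
    by (rule has_vd_eq[OF has_vector_derivative_diff[OF dy1 bounded_bilinear.has_vector_derivative[OF bb_cdot dL2 dps]]])
      (simp add: cdot_simps d1_def X12_def Si_def l2_def s_def yt_def algebra_simps)
  have dw: "((\<lambda>t. matrix_inv (S t) *v L2 t) has_vector_derivative
      - (Si *v l1) - (s * X12 x) *s (Si *v l2)) (at x)"
    by (rule has_vd_eq[OF bounded_bilinear.has_vector_derivative[OF bb_mv dSi dL2]])
      (simp add: vec_eq_iff mv_simps algebra_simps X12_def Si_def l2_def l1_def s_def)
  have dX12: "(X12 has_vector_derivative (X22 x - s * X12 x ^ 2 - X11 x)) (at x)"
    unfolding X12_def[abs_def]
    by (rule has_vd_eq[OF bounded_bilinear.has_vector_derivative[OF bb_cdot dL2 dw]])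
      (simp add: cdot_simps X12_def X11_def X22_def Si_def l2_def l1_def s_def power2_eq_square algebra_simps)
  define K where "K = op2 l1 l2 - op2 l2 l1"
  have k1: "A *v w - S x *v (cadj A *v (Si *v w)) = K *v (Si *v w)" for w
  proof -
    have "(A ** S x - S x ** cadj A) *v (Si *v w) = K *v (Si *v w)"
      by (simp add: idS K_def l1_def l2_def)
    thus ?thesis by (simp add: mv_simps SSiv del: op2_mv)
  qed
  have k2: "cadj A *v (Si *v w) = Si *v (A *v w) - Si *v (K *v (Si *v w))" for w
  proof -
    have "Si *v (A *v w - S x *v (cadj A *v (Si *v w))) = Si *v (K *v (Si *v w))"
      by (simp add: k1)
    thus ?thesis by (simp add: mv_simps SiSv del: op2_mv) (simp add: algebra_simps)
  qed
  define P where "P = cdot l2 (ps x)"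
  define Q where "Q = cdot l1 (ps x)"
  have psx: "ps x = Si *v (R *v F x)" by (simp add: psF Si_def)
  have cA: "cdot l2 (cadj A *v ps x) = y1 x * X11 x + y2 x * X12 x + lam * P - P * X11 x + Q * X12 x"
    unfolding psx k2
    by (simp add: ARv K_def mv_simps cdot_simps F_def X11_def X12_def Si_def l1_def l2_def
        P_def Q_def psx algebra_simps)
  define D where "D = - (s * lam * y1 x) - s * yt x * X22 x + s * cdot l2 (cadj A *v ps x)
      - s * X12 x * d1 x - s * (X22 x - s * X12 x ^ 2 - X11 x) * yt x"
  have dd1: "(d1 has_vector_derivative D) (at x)"
    unfolding d1_def[abs_def]
    by (rule has_vd_eq[OF has_vector_derivative_diff[OF has_vector_derivative_add[OF dy2
          bounded_bilinear.has_vector_derivative[OF bb_cdot dL1 dps]]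
          has_vector_derivative_mult[OF has_vector_derivative_mult_right[OF dX12] dyt]]])
      (simp add: D_def cdot_simps cdot_adj cs X22_def Si_def l1_def l2_def s_def algebra_simps)
  have yt_x: "yt x = y1 x - P" by (simp add: yt_def P_def l2_def)
  have d1_x: "d1 x = y2 x + Q - s * X12 x * yt x" by (simp add: d1_def Q_def l1_def s_def)
  have fin: "- D + (2 * s * (X11 x - X22 x) + 2 * X12 x ^ 2) * yt x = lam * s * yt x"
    using sig
  proof
    assume "\<sigma> = 1" hence s1: "s = 1" by (simp add: s_def)
    show ?thesis unfolding D_def cA d1_x yt_x s1 by (simp add: algebra_simps power2_eq_square)
  next
    assume "\<sigma> = -1" hence s1: "s = -1" by (simp add: s_def)
    show ?thesis unfolding D_def cA d1_x yt_x s1 by (simp add: algebra_simps power2_eq_square)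
  qed
  show ?thesis using dyt dd1 fin by (auto simp: s_def)
qed

lemma mat_scal_neg: "mat (- of_real x) ** (M::complex^'n^'m) = x *\<^sub>R (mat (-1) ** M)"
  using mat_scal[of "-1" x M] by simp

lemma mat_scal_neg2: "mat (- (c * of_real x)) ** (M::complex^'n^'m) = x *\<^sub>R (mat (-c) ** M)"
  using mat_scal[of "-c" x M] by simp

lemma mv_mat_alpha: "(mat c ** (M::complex^'n^'n)) *v v = c *s (M *v v)"
  by (simp add: mv_simps)

lemma mexp_vd_c:
  "((\<lambda>t. mexp (t *\<^sub>R (mat c ** \<alpha>)) *v w) has_vector_derivative c *s (\<alpha> *v (mexp (t *\<^sub>R (mat c ** \<alpha>)) *v w))) (at t)"
  using mexp_vd[of "mat c ** \<alpha>" w t UNIV] by (simp add: mv_mat_alpha)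

definition up :: "complex^'n^'n \<Rightarrow> complex \<Rightarrow> complex^'n \<Rightarrow> complex \<Rightarrow> complex^'n" where
  "up \<alpha> \<mu> g c = (mat \<mu> ** \<alpha> + mat c) *v g"
definition um :: "complex^'n^'n \<Rightarrow> complex \<Rightarrow> complex^'n \<Rightarrow> complex \<Rightarrow> complex^'n" where
  "um \<alpha> \<mu> g c = (mat \<mu> ** \<alpha> - mat c) *v g"

definition E :: "complex^'n^'n \<Rightarrow> complex \<Rightarrow> complex^'n \<Rightarrow> real \<Rightarrow> complex^'n" where
  "E \<alpha> c w t = mexp (t *\<^sub>R (mat c ** \<alpha>)) *v w"

lemma E_vd: "(E \<alpha> c w has_vector_derivative c *s (\<alpha> *v E \<alpha> c w t)) (at t)"
  unfolding E_def[abs_def] by (rule mexp_vd_c)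

lemma E_0: "E \<alpha> c w 0 = w"
  by (simp add: E_def mexp_zero)

definition L1p where "L1p \<alpha> \<mu> g t = (- \<i>) *s (\<alpha> *v (E \<alpha> \<i> (up \<alpha> \<mu> g 1) t - E \<alpha> (-\<i>) (um \<alpha> \<mu> g 1) t))"
definition L2p where "L2p \<alpha> \<mu> g t = E \<alpha> \<i> (up \<alpha> \<mu> g 1) t + E \<alpha> (-\<i>) (um \<alpha> \<mu> g 1) t"
definition L1m where "L1m \<alpha> \<mu> g t = - (\<alpha> *v (E \<alpha> 1 (up \<alpha> \<mu> g \<i>) t - E \<alpha> (-1) (um \<alpha> \<mu> g \<i>) t))"
definition L2m where "L2m \<alpha> \<mu> g t = E \<alpha> 1 (up \<alpha> \<mu> g \<i>) t + E \<alpha> (-1) (um \<alpha> \<mu> g \<i>) t"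

lemma Lam1_p: "0 \<le> t \<Longrightarrow> Lam1 \<alpha> \<mu> g t = L1p \<alpha> \<mu> g t"
  by (simp add: Lam1_def L1p_def E_def up_def um_def mat_scal mat_scal_neg2)
lemma Lam2_p: "0 \<le> t \<Longrightarrow> Lam2 \<alpha> \<mu> g t = L2p \<alpha> \<mu> g t"
  by (simp add: Lam2_def L2p_def E_def up_def um_def mat_scal mat_scal_neg2)
lemma Lam1_m: "t < 0 \<Longrightarrow> Lam1 \<alpha> \<mu> g t = L1m \<alpha> \<mu> g t"
  using mat_scal[of 1 t \<alpha>]
  by (simp add: Lam1_def L1m_def E_def up_def um_def mat_scal_neg)
lemma Lam2_m: "t < 0 \<Longrightarrow> Lam2 \<alpha> \<mu> g t = L2m \<alpha> \<mu> g t"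
  using mat_scal[of 1 t \<alpha>]
  by (simp add: Lam2_def L2m_def E_def up_def um_def mat_scal_neg)

lemma L1p_0: "L1p \<alpha> \<mu> g 0 = (- 2 * \<i>) *s (\<alpha> *v g)"
  by (simp add: L1p_def E_0 up_def um_def mv_simps vec_eq_iff algebra_simps; simp add: matrix_vector_mult_def sum_distrib_left algebra_simps)
lemma L1m_0: "L1m \<alpha> \<mu> g 0 = (- 2 * \<i>) *s (\<alpha> *v g)"
  by (simp add: L1m_def E_0 up_def um_def mv_simps vec_eq_iff algebra_simps; simp add: matrix_vector_mult_def sum_distrib_left algebra_simps)
lemma L2p_0: "L2p \<alpha> \<mu> g 0 = (2 * \<mu>) *s (\<alpha> *v g)"
  by (simp add: L2p_def E_0 up_def um_def mv_simps vec_eq_iff algebra_simps; simp add: matrix_vector_mult_def sum_distrib_left algebra_simps)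
lemma L2m_0: "L2m \<alpha> \<mu> g 0 = (2 * \<mu>) *s (\<alpha> *v g)"
  by (simp add: L2m_def E_0 up_def um_def mv_simps vec_eq_iff algebra_simps; simp add: matrix_vector_mult_def sum_distrib_left algebra_simps)

lemma Lam1_m': "t \<le> 0 \<Longrightarrow> Lam1 \<alpha> \<mu> g t = L1m \<alpha> \<mu> g t"
  by (cases "t = 0") (simp_all add: Lam1_m Lam1_p L1p_0 L1m_0)
lemma Lam2_m': "t \<le> 0 \<Longrightarrow> Lam2 \<alpha> \<mu> g t = L2m \<alpha> \<mu> g t"
  by (cases "t = 0") (simp_all add: Lam2_m Lam2_p L2p_0 L2m_0)

lemma L2p_vd: "(L2p \<alpha> \<mu> g has_vector_derivative - L1p \<alpha> \<mu> g t) (at t)"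
  unfolding L2p_def[abs_def]
  by (rule has_vd_eq[OF has_vector_derivative_add[OF E_vd E_vd]])
    (simp add: L1p_def mv_simps vec_eq_iff algebra_simps)
lemma L1p_vd: "(L1p \<alpha> \<mu> g has_vector_derivative (complex_of_real 1) *s ((\<alpha> ** \<alpha>) *v L2p \<alpha> \<mu> g t)) (at t)"
  unfolding L1p_def[abs_def]
  by (rule has_vd_eq[OF bounded_linear.has_vector_derivative[OF bounded_bilinear.bounded_linear_right[OF bb_smult]]
       , OF bounded_linear.has_vector_derivative[OF bl_mv has_vector_derivative_diff[OF E_vd E_vd]]])
    (simp add: L2p_def mv_simps vec_eq_iff algebra_simps)
lemma L2m_vd: "(L2m \<alpha> \<mu> g has_vector_derivative - L1m \<alpha> \<mu> g t) (at t)"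
  unfolding L2m_def[abs_def]
  by (rule has_vd_eq[OF has_vector_derivative_add[OF E_vd E_vd]])
    (simp add: L1m_def mv_simps vec_eq_iff algebra_simps)
lemma L1m_vd: "(L1m \<alpha> \<mu> g has_vector_derivative (complex_of_real (-1)) *s ((\<alpha> ** \<alpha>) *v L2m \<alpha> \<mu> g t)) (at t)"
  unfolding L1m_def[abs_def]
  by (rule has_vd_eq[OF has_vector_derivative_minus[OF bounded_linear.has_vector_derivative[OF bl_mv has_vector_derivative_diff[OF E_vd E_vd]]]])
    (simp add: L2m_def mv_simps vec_eq_iff algebra_simps)

definition Sp where "Sp \<alpha> \<mu> g t = integral {0..t} (\<lambda>\<tau>. op2 (L2p \<alpha> \<mu> g \<tau>) (L2p \<alpha> \<mu> g \<tau>))"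
definition Sm where "Sm \<alpha> \<mu> g t = integral {t..0} (\<lambda>\<tau>. op2 (L2m \<alpha> \<mu> g \<tau>) (L2m \<alpha> \<mu> g \<tau>))"

lemma outer_op2: "outer v = op2 v v"
  by (simp add: outer_def op2_def)

lemma SM_p: "0 \<le> t \<Longrightarrow> SM \<alpha> \<mu> g t = Sp \<alpha> \<mu> g t"
  unfolding SM_def Sp_def by (auto intro!: integral_cong simp: outer_op2 Lam2_p)

lemma SM_m: "t \<le> 0 \<Longrightarrow> SM \<alpha> \<mu> g t = Sm \<alpha> \<mu> g t"
proof (cases "t = 0")
  case True thus ?thesis by (simp add: SM_def Sm_def)
next
  case False
  assume "t \<le> 0" hence "t < 0" using False by simp
  thus ?thesis unfolding SM_def Sm_def by (auto intro!: integral_cong simp: outer_op2 Lam2_m')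
qed

lemma cont_L2p: "continuous_on S (L2p \<alpha> \<mu> g)"
  by (rule continuous_on_vector_derivative) (rule has_vector_derivative_at_within[OF L2p_vd])
lemma cont_L2m: "continuous_on S (L2m \<alpha> \<mu> g)"
  by (rule continuous_on_vector_derivative) (rule has_vector_derivative_at_within[OF L2m_vd])
lemma cont_fp: "continuous_on S (\<lambda>\<tau>. op2 (L2p \<alpha> \<mu> g \<tau>) (L2p \<alpha> \<mu> g \<tau>))"
  by (intro bounded_bilinear.continuous_on[OF bb_op2] cont_L2p)
lemma cont_fm: "continuous_on S (\<lambda>\<tau>. op2 (L2m \<alpha> \<mu> g \<tau>) (L2m \<alpha> \<mu> g \<tau>))"
  by (intro bounded_bilinear.continuous_on[OF bb_op2] cont_L2m)

lemma Sp_vd_within: "t \<in> {0..b} \<Longrightarrow>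
   (Sp \<alpha> \<mu> g has_vector_derivative op2 (L2p \<alpha> \<mu> g t) (L2p \<alpha> \<mu> g t)) (at t within {0..b})"
  unfolding Sp_def[abs_def] by (rule integral_has_vector_derivative[OF cont_fp])

lemma Sp_vd: "0 < t \<Longrightarrow>
   (Sp \<alpha> \<mu> g has_vector_derivative op2 (L2p \<alpha> \<mu> g t) (L2p \<alpha> \<mu> g t)) (at t)"
  using Sp_vd_within[of t "t+1" \<alpha> \<mu> g] at_within_interior[of t "{0..t+1}"] by simp

lemma Sm_vd_within: assumes "t \<in> {a..0}"
  shows "(Sm \<alpha> \<mu> g has_vector_derivative - op2 (L2m \<alpha> \<mu> g t) (L2m \<alpha> \<mu> g t)) (at t within {a..0})"
proof -
  let ?f = "\<lambda>\<tau>. op2 (L2m \<alpha> \<mu> g \<tau>) (L2m \<alpha> \<mu> g \<tau>)"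
  have eq: "Sm \<alpha> \<mu> g u = integral {a..0} ?f - integral {a..u} ?f" if "u \<in> {a..0}" for u
  proof -
    have "integral {a..u} ?f + integral {u..0} ?f = integral {a..0} ?f"
      using that by (intro Henstock_Kurzweil_Integration.integral_combine integrable_continuous_real cont_fm) auto
    thus ?thesis by (simp add: Sm_def algebra_simps)
  qed
  have "((\<lambda>u. integral {a..0} ?f - integral {a..u} ?f) has_vector_derivative 0 - ?f t) (at t within {a..0})"
    by (intro has_vector_derivative_diff has_vector_derivative_const integral_has_vector_derivative[OF cont_fm] assms)
  thus ?thesis
    by (intro has_vector_derivative_transform[OF assms eq]) auto
qed

lemma Sm_vd: "t < 0 \<Longrightarrow>
   (Sm \<alpha> \<mu> g has_vector_derivative - op2 (L2m \<alpha> \<mu> g t) (L2m \<alpha> \<mu> g t)) (at t)"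
  using Sm_vd_within[of t "t - 1" \<alpha> \<mu> g] at_within_interior[of t "{t-1..0}"] by simp

lemma op2_mvl: "op2 ((M::complex^'n^'n) *v a) b = M ** op2 a b"
  by (simp add: vec_eq_iff op2_def matrix_matrix_mult_def matrix_vector_mult_def sum_distrib_left algebra_simps)
lemma op2_mvr: "op2 a ((M::complex^'n^'n) *v b) = op2 a b ** cadj M"
  by (simp add: vec_eq_iff op2_def matrix_matrix_mult_def matrix_vector_mult_def cadj_def sum_distrib_left algebra_simps)
lemma op2_at0:
  assumes "cnj \<mu> = - \<mu>"
  shows "op2 ((- 2 * \<i>) *s w) ((2 * \<mu>) *s w) - op2 ((2 * \<mu>) *s w) ((- 2 * \<i>) *s w) = 0"
  by (simp add: vec_eq_iff op2_def assms algebra_simps)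

lemma vd_zero_deriv: "(f has_vector_derivative 0) F \<Longrightarrow> (f has_derivative (\<lambda>h. 0)) F"
  by (simp add: has_vector_derivative_def)

lemma idp:
  assumes mu: "cnj \<mu> = - \<mu>" and x: "0 \<le> x"
  shows "(\<alpha> ** \<alpha>) ** Sp \<alpha> \<mu> g x - Sp \<alpha> \<mu> g x ** cadj (\<alpha> ** \<alpha>)
         = op2 (L1p \<alpha> \<mu> g x) (L2p \<alpha> \<mu> g x) - op2 (L2p \<alpha> \<mu> g x) (L1p \<alpha> \<mu> g x)"
proof -
  define A where "A = \<alpha> ** \<alpha>"
  define G where "G t = A ** Sp \<alpha> \<mu> g t - Sp \<alpha> \<mu> g t ** cadj A
      - (op2 (L1p \<alpha> \<mu> g t) (L2p \<alpha> \<mu> g t) - op2 (L2p \<alpha> \<mu> g t) (L1p \<alpha> \<mu> g t))" for t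
  have dG: "(G has_derivative (\<lambda>h. 0)) (at t within {0..x})" if t: "t \<in> {0..x}" for t
    unfolding G_def[abs_def]
    apply (rule vd_zero_deriv)
    apply (rule has_vd_eq[OF has_vector_derivative_diff[OF has_vector_derivative_diff[OF
        bounded_linear.has_vector_derivative[OF bounded_bilinear.bounded_linear_right[OF bb_mm] Sp_vd_within[OF t]]
        bounded_linear.has_vector_derivative[OF bounded_bilinear.bounded_linear_left[OF bb_mm] Sp_vd_within[OF t]]]
        has_vector_derivative_diff[OF
          bounded_bilinear.has_vector_derivative[OF bb_op2 has_vector_derivative_at_within[OF L1p_vd] has_vector_derivative_at_within[OF L2p_vd]]
          bounded_bilinear.has_vector_derivative[OF bb_op2 has_vector_derivative_at_within[OF L2p_vd] has_vector_derivative_at_within[OF L1p_vd]]]]])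
    by (simp add: A_def op2_mvl op2_mvr bounded_bilinear.minus_left[OF bb_op2] bounded_bilinear.minus_right[OF bb_op2])
  obtain c where c: "\<And>t. t \<in> {0..x} \<Longrightarrow> G t = c"
    using has_derivative_zero_constant[of "{0..x}" G] dG by auto
  have "G 0 = 0"
    unfolding G_def Sp_def L1p_0 L2p_0 using op2_at0[OF mu, of "\<alpha> *v g"] by simp
  hence "G x = 0" using c[of 0] c[of x] x by simp
  thus ?thesis by (simp add: G_def A_def)
qed

lemma idm:
  assumes mu: "cnj \<mu> = - \<mu>" and x: "x \<le> 0"
  shows "(\<alpha> ** \<alpha>) ** Sm \<alpha> \<mu> g x - Sm \<alpha> \<mu> g x ** cadj (\<alpha> ** \<alpha>)
         = op2 (L1m \<alpha> \<mu> g x) (L2m \<alpha> \<mu> g x) - op2 (L2m \<alpha> \<mu> g x) (L1m \<alpha> \<mu> g x)"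
proof -
  define A where "A = \<alpha> ** \<alpha>"
  define G where "G t = A ** Sm \<alpha> \<mu> g t - Sm \<alpha> \<mu> g t ** cadj A
      - (op2 (L1m \<alpha> \<mu> g t) (L2m \<alpha> \<mu> g t) - op2 (L2m \<alpha> \<mu> g t) (L1m \<alpha> \<mu> g t))" for t
  have dG: "(G has_derivative (\<lambda>h. 0)) (at t within {x..0})" if t: "t \<in> {x..0}" for t
    unfolding G_def[abs_def]
    apply (rule vd_zero_deriv)
    apply (rule has_vd_eq[OF has_vector_derivative_diff[OF has_vector_derivative_diff[OF
        bounded_linear.has_vector_derivative[OF bounded_bilinear.bounded_linear_right[OF bb_mm] Sm_vd_within[OF t]]
        bounded_linear.has_vector_derivative[OF bounded_bilinear.bounded_linear_left[OF bb_mm] Sm_vd_within[OF t]]]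
        has_vector_derivative_diff[OF
          bounded_bilinear.has_vector_derivative[OF bb_op2 has_vector_derivative_at_within[OF L1m_vd] has_vector_derivative_at_within[OF L2m_vd]]
          bounded_bilinear.has_vector_derivative[OF bb_op2 has_vector_derivative_at_within[OF L2m_vd] has_vector_derivative_at_within[OF L1m_vd]]]]])
    by (simp add: A_def op2_mvl op2_mvr bounded_bilinear.minus_left[OF bb_op2] bounded_bilinear.minus_right[OF bb_op2]
        bounded_bilinear.minus_left[OF bb_mm] bounded_bilinear.minus_right[OF bb_mm])
  obtain c where c: "\<And>t. t \<in> {x..0} \<Longrightarrow> G t = c"
    using has_derivative_zero_constant[of "{x..0}" G] dG by auto
  have "G 0 = 0"
    unfolding G_def Sm_def L1m_0 L2m_0 using op2_at0[OF mu, of "\<alpha> *v g"] by simp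
  hence "G x = 0" using c[of 0] c[of x] x by simp
  thus ?thesis by (simp add: G_def A_def)
qed

lemma two_ne_one: "(2::2) \<noteq> 1" by simp

definition Gp :: "complex \<Rightarrow> complex^2^2" where
  "Gp c = (\<chi> i j. if i = 1 then (if j = 1 then 0 else 1) else (if j = 1 then c else 0))"

lemma Gp_mv1: "(Gp c *v y) $ 1 = y $ 2"
  by (simp add: Gp_def matrix_vector_mult_def sum_2)
lemma Gp_mv2: "(Gp c *v y) $ 2 = c * y $ 1"
  by (simp add: Gp_def matrix_vector_mult_def sum_2)

lemma ii_mult: "\<i> * s * (\<i> * t) = - (s * (t::complex))" by (simp add: algebra_simps)
lemma TDp: "s ^ 2 = lam \<Longrightarrow> Tp s ** Dp s = Gp (- lam) ** Tp s"
  by (simp add: vec_eq_iff forall_2 matrix_matrix_mult_def sum_2 Tp_def Dp_def Gp_def power2_eq_square ii_mult)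
lemma TDm: "s ^ 2 = lam \<Longrightarrow> Tm s ** Dm s = Gp lam ** Tm s"
  by (simp add: vec_eq_iff forall_2 matrix_matrix_mult_def sum_2 Tm_def Dm_def Gp_def power2_eq_square)
lemma detTp: "s \<noteq> 0 \<Longrightarrow> det (Tp s) \<noteq> 0"
  by (simp add: det_2 Tp_def)
lemma detTm: "s \<noteq> 0 \<Longrightarrow> det (Tm s) \<noteq> 0"
  by (simp add: det_2 Tm_def)

lemma y_vd:
  assumes "T ** D = G ** T"
  shows "((\<lambda>t. T *v (mexp (t *\<^sub>R D) *v w)) has_vector_derivative G *v (T *v (mexp (t *\<^sub>R D) *v w))) (at t)"
  by (rule has_vd_eq[OF bounded_linear.has_vector_derivative[OF bl_mv mexp_vd]])
    (metis assms matrix_vector_mul_assoc)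

lemma yv_p: "0 < t \<Longrightarrow> yv s h t = Tp s *v (mexp (t *\<^sub>R Dp s) *v (matrix_inv (Tp s) *v h))"
  by (simp add: yv_def mat_scal1 matrix_vector_mul_assoc matrix_mul_assoc)
lemma yv_m: "t \<le> 0 \<Longrightarrow> yv s h t = Tm s *v (mexp (t *\<^sub>R Dm s) *v (matrix_inv (Tm s) *v h))"
  by (simp add: yv_def mat_scal1 matrix_vector_mul_assoc matrix_mul_assoc)

lemma yv_vd_p:
  assumes "s ^ 2 = lam" "0 < x"
  shows "((\<lambda>t. yv s h t $ 1) has_vector_derivative yv s h x $ 2) (at x)"
    "((\<lambda>t. yv s h t $ 2) has_vector_derivative - (complex_of_real 1 * lam * yv s h x $ 1)) (at x)"
proof -
  let ?Y = "\<lambda>t. Tp s *v (mexp (t *\<^sub>R Dp s) *v (matrix_inv (Tp s) *v h))"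
  have d: "(?Y has_vector_derivative Gp (- lam) *v ?Y x) (at x)"
    by (rule y_vd[OF TDp[OF assms(1)]])
  have eq: "\<And>t. t \<in> {0<..} \<Longrightarrow> ?Y t = yv s h t" by (simp add: yv_p)
  have d': "(yv s h has_vector_derivative Gp (- lam) *v yv s h x) (at x)"
    using has_vector_derivative_transform_within_open[OF d open_greaterThan _ eq] assms eq[of x] by simp
  show "((\<lambda>t. yv s h t $ 1) has_vector_derivative yv s h x $ 2) (at x)"
    using vd_nth[OF d', of 1] by (simp add: Gp_mv1)
  show "((\<lambda>t. yv s h t $ 2) has_vector_derivative - (complex_of_real 1 * lam * yv s h x $ 1)) (at x)"
    using vd_nth[OF d', of 2] by (simp add: Gp_mv2)
qed

lemma yv_vd_m:
  assumes "s ^ 2 = lam" "x < 0"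
  shows "((\<lambda>t. yv s h t $ 1) has_vector_derivative yv s h x $ 2) (at x)"
    "((\<lambda>t. yv s h t $ 2) has_vector_derivative - (complex_of_real (-1) * lam * yv s h x $ 1)) (at x)"
proof -
  let ?Y = "\<lambda>t. Tm s *v (mexp (t *\<^sub>R Dm s) *v (matrix_inv (Tm s) *v h))"
  have d: "(?Y has_vector_derivative Gp lam *v ?Y x) (at x)"
    by (rule y_vd[OF TDm[OF assms(1)]])
  have eq: "\<And>t. t \<in> {..<0} \<Longrightarrow> ?Y t = yv s h t" by (simp add: yv_m)
  have d': "(yv s h has_vector_derivative Gp lam *v yv s h x) (at x)"
    using has_vector_derivative_transform_within_open[OF d open_lessThan _ eq] assms eq[of x] by simp
  show "((\<lambda>t. yv s h t $ 1) has_vector_derivative yv s h x $ 2) (at x)"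
    using vd_nth[OF d', of 1] by (simp add: Gp_mv1)
  show "((\<lambda>t. yv s h t $ 2) has_vector_derivative - (complex_of_real (-1) * lam * yv s h x $ 1)) (at x)"
    using vd_nth[OF d', of 2] by (simp add: Gp_mv2)
qed

lemma Pi_mv: "PiM \<alpha> \<mu> g x *v y = y $ 1 *s Lam1 \<alpha> \<mu> g x + y $ 2 *s Lam2 \<alpha> \<mu> g x"
  by (simp add: vec_eq_iff matrix_vector_mult_def sum_2 PiM_def algebra_simps)
lemma cadjPi_1: "(cadj (PiM \<alpha> \<mu> g x) *v w) $ 1 = cdot (Lam1 \<alpha> \<mu> g x) w"
  by (simp add: matrix_vector_mult_def cadj_def PiM_def cdot_def)
lemma cadjPi_2: "(cadj (PiM \<alpha> \<mu> g x) *v w) $ 2 = cdot (Lam2 \<alpha> \<mu> g x) w"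
  by (simp add: matrix_vector_mult_def cadj_def PiM_def cdot_def)
lemma J_1: "(Jmat *v z) $ 1 = z $ 2"
  by (simp add: matrix_vector_mult_def Jmat_def sum_2)
lemma J_2: "(Jmat *v z) $ 2 = - z $ 1"
  by (simp add: matrix_vector_mult_def Jmat_def sum_2)

lemma ytil_eq: "ytil \<alpha> \<mu> g lam s h t $ 1 = yv s h t $ 1 - cdot (Lam2 \<alpha> \<mu> g t)
   (matrix_inv (SM \<alpha> \<mu> g t) *v (matrix_inv (\<alpha> ** \<alpha> - mat lam) *v
     (yv s h t $ 1 *s Lam1 \<alpha> \<mu> g t + yv s h t $ 2 *s Lam2 \<alpha> \<mu> g t)))"
  by (simp add: ytil_def wA_def matrix_vector_mult_diff_rdistrib matrix_vector_mul_assoc[symmetric]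
     J_1 cadjPi_2 Pi_mv)

lemma Pi_axis1: "PiM \<alpha> \<mu> g x *v axis 1 1 = Lam1 \<alpha> \<mu> g x"
  by (simp add: Pi_mv axis_def)
lemma Pi_axis2: "PiM \<alpha> \<mu> g x *v axis 2 1 = Lam2 \<alpha> \<mu> g x"
  by (simp add: Pi_mv axis_def)

lemma XM_11: "XM \<alpha> \<mu> g x $ 1 $ 1 = cdot (Lam2 \<alpha> \<mu> g x) (matrix_inv (SM \<alpha> \<mu> g x) *v Lam1 \<alpha> \<mu> g x)"
  by (simp add: mv_axis[symmetric] XM_def matrix_vector_mul_assoc[symmetric] Pi_axis1 J_1 cadjPi_2)
lemma XM_12: "XM \<alpha> \<mu> g x $ 1 $ 2 = cdot (Lam2 \<alpha> \<mu> g x) (matrix_inv (SM \<alpha> \<mu> g x) *v Lam2 \<alpha> \<mu> g x)"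
  by (simp add: mv_axis[symmetric] XM_def matrix_vector_mul_assoc[symmetric] Pi_axis2 J_1 cadjPi_2)
lemma XM_22: "XM \<alpha> \<mu> g x $ 2 $ 2 = - cdot (Lam1 \<alpha> \<mu> g x) (matrix_inv (SM \<alpha> \<mu> g x) *v Lam2 \<alpha> \<mu> g x)"
  by (simp add: mv_axis[symmetric] XM_def matrix_vector_mul_assoc[symmetric] Pi_axis2 J_2 cadjPi_1)

theorem corollary8p3:
  fixes L :: ereal and \<alpha> :: "complex^'n^'n" and g :: "complex^'n"
    and \<mu> lam s :: complex and h :: "complex^2"
  assumes "0 < L"
    and "cnj \<mu> = - \<mu>"
    and "det (mat \<mu> ** \<alpha> + mat 1) \<noteq> 0" and "det (mat \<mu> ** \<alpha> - mat 1) \<noteq> 0"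
    and "det (mat \<mu> ** \<alpha> + mat \<i>) \<noteq> 0" and "det (mat \<mu> ** \<alpha> - mat \<i>) \<noteq> 0"
    and "\<And>x. x \<noteq> 0 \<Longrightarrow> ereal \<bar>x\<bar> < L \<Longrightarrow> det (SM \<alpha> \<mu> g x) \<noteq> 0"
    and "lam \<noteq> 0" and "s ^ 2 = lam"
    and "det (\<alpha> ** \<alpha> - mat lam) \<noteq> 0"
  shows "\<exists>d1 d2. \<forall>x. x \<noteq> 0 \<and> ereal \<bar>x\<bar> < L \<longrightarrow>
           ((\<lambda>t. ytil \<alpha> \<mu> g lam s h t $ 1) has_vector_derivative d1 x) (at x)
         \<and> (d1 has_vector_derivative d2 x) (at x)
         \<and> - d2 x + qbreve \<alpha> \<mu> g x * ytil \<alpha> \<mu> g lam s h x $ 1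
             = lam * of_real (sgn x) * ytil \<alpha> \<mu> g lam s h x $ 1"
proof -
  note A = assms
  define Ar where "Ar = \<alpha> ** \<alpha>"
  define R where "R = matrix_inv (\<alpha> ** \<alpha> - mat lam)"
  have R1: "R ** (Ar - mat lam) = mat 1" and R2: "(Ar - mat lam) ** R = mat 1"
    using matrix_inv_both[OF A(10)] by (simp_all add: R_def Ar_def)
  define psF where "psF t = matrix_inv (SM \<alpha> \<mu> g t) *v (R *v (yv s h t $ 1 *s Lam1 \<alpha> \<mu> g t + yv s h t $ 2 *s Lam2 \<alpha> \<mu> g t))" for t
  define Y where "Y t = yv s h t $ 1 - cdot (Lam2 \<alpha> \<mu> g t) (psF t)" for t
  define X11 where "X11 t = cdot (Lam2 \<alpha> \<mu> g t) (matrix_inv (SM \<alpha> \<mu> g t) *v Lam1 \<alpha> \<mu> g t)" for t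
  define X12 where "X12 t = cdot (Lam2 \<alpha> \<mu> g t) (matrix_inv (SM \<alpha> \<mu> g t) *v Lam2 \<alpha> \<mu> g t)" for t
  define X22 where "X22 t = - cdot (Lam1 \<alpha> \<mu> g t) (matrix_inv (SM \<alpha> \<mu> g t) *v Lam2 \<alpha> \<mu> g t)" for t
  define d1f where "d1f \<sigma> t = yv s h t $ 2 + cdot (Lam1 \<alpha> \<mu> g t) (psF t) - complex_of_real \<sigma> * X12 t * Y t" for \<sigma> t
  define d1 where "d1 t = d1f (sgn t) t" for t
  define d2 where "d2 t = vector_derivative d1 (at t)" for t
  have ytilY: "\<And>t. ytil \<alpha> \<mu> g lam s h t $ 1 = Y t"
    by (simp add: ytil_eq Y_def psF_def R_def)
  have main: "((\<lambda>t. ytil \<alpha> \<mu> g lam s h t $ 1) has_vector_derivative d1 x) (at x)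
         \<and> (d1 has_vector_derivative d2 x) (at x)
         \<and> - d2 x + qbreve \<alpha> \<mu> g x * ytil \<alpha> \<mu> g lam s h x $ 1
             = lam * of_real (sgn x) * ytil \<alpha> \<mu> g lam s h x $ 1"
    if x0: "x \<noteq> 0" and xL: "ereal \<bar>x\<bar> < L" for x
  proof -
    define \<sigma> where "\<sigma> = sgn x"
    have d0: "det (SM \<alpha> \<mu> g x) \<noteq> 0" using A(7) x0 xL by auto
    have hyp: "(\<sigma> = 1 \<or> \<sigma> = -1) \<and>
      (Lam1 \<alpha> \<mu> g has_vector_derivative complex_of_real \<sigma> *s (Ar *v Lam2 \<alpha> \<mu> g x)) (at x) \<and>
      (Lam2 \<alpha> \<mu> g has_vector_derivative - Lam1 \<alpha> \<mu> g x) (at x) \<and>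
      (SM \<alpha> \<mu> g has_vector_derivative \<sigma> *\<^sub>R op2 (Lam2 \<alpha> \<mu> g x) (Lam2 \<alpha> \<mu> g x)) (at x) \<and>
      ((\<lambda>t. yv s h t $ 1) has_vector_derivative yv s h x $ 2) (at x) \<and>
      ((\<lambda>t. yv s h t $ 2) has_vector_derivative - (complex_of_real \<sigma> * lam * yv s h x $ 1)) (at x) \<and>
      Ar ** SM \<alpha> \<mu> g x - SM \<alpha> \<mu> g x ** cadj Ar
        = op2 (Lam1 \<alpha> \<mu> g x) (Lam2 \<alpha> \<mu> g x) - op2 (Lam2 \<alpha> \<mu> g x) (Lam1 \<alpha> \<mu> g x) \<and>
      (\<forall>t. (0 < t \<longleftrightarrow> 0 < x) \<longrightarrow> t \<noteq> 0 \<longrightarrow> sgn t = \<sigma>)"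
    proof (cases "0 < x")
      case True
      hence s1: "\<sigma> = 1" by (simp add: \<sigma>_def)
      have e1: "\<And>t. t \<in> {0<..} \<Longrightarrow> L1p \<alpha> \<mu> g t = Lam1 \<alpha> \<mu> g t" by (simp add: Lam1_p)
      have e2: "\<And>t. t \<in> {0<..} \<Longrightarrow> L2p \<alpha> \<mu> g t = Lam2 \<alpha> \<mu> g t" by (simp add: Lam2_p)
      have eS: "\<And>t. t \<in> {0<..} \<Longrightarrow> Sp \<alpha> \<mu> g t = SM \<alpha> \<mu> g t" by (simp add: SM_p)
      have xi: "x \<in> {0<..}" using True by simp
      show ?thesis
        unfolding s1 using True
        using has_vector_derivative_transform_within_open[OF L1p_vd open_greaterThan xi e1]
          has_vector_derivative_transform_within_open[OF L2p_vd open_greaterThan xi e2]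
          has_vector_derivative_transform_within_open[OF Sp_vd[OF True] open_greaterThan xi eS]
          yv_vd_p[OF A(9) True, of h] idp[OF A(2), of x \<alpha> g]
        by (simp add: Lam1_p Lam2_p SM_p Ar_def)
    next
      case False
      hence xn: "x < 0" using x0 by simp
      hence s1: "\<sigma> = -1" by (simp add: \<sigma>_def)
      have e1: "\<And>t. t \<in> {..<0} \<Longrightarrow> L1m \<alpha> \<mu> g t = Lam1 \<alpha> \<mu> g t" by (simp add: Lam1_m)
      have e2: "\<And>t. t \<in> {..<0} \<Longrightarrow> L2m \<alpha> \<mu> g t = Lam2 \<alpha> \<mu> g t" by (simp add: Lam2_m)
      have eS: "\<And>t. t \<in> {..<0} \<Longrightarrow> Sm \<alpha> \<mu> g t = SM \<alpha> \<mu> g t" by (simp add: SM_m)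
      have xi: "x \<in> {..<0}" using xn by simp
      show ?thesis
        unfolding s1 using xn
        using has_vector_derivative_transform_within_open[OF L1m_vd open_lessThan xi e1]
          has_vector_derivative_transform_within_open[OF L2m_vd open_lessThan xi e2]
          has_vector_derivative_transform_within_open[OF Sm_vd[OF xn] open_lessThan xi eS]
          yv_vd_m[OF A(9) xn, of h] idm[OF A(2), of x \<alpha> g]
        by (simp add: Lam1_m Lam2_m SM_m Ar_def)
    qed
    have so: "(Y has_vector_derivative d1f \<sigma> x) (at x) \<and>
      (\<exists>D. (d1f \<sigma> has_vector_derivative D) (at x) \<and>
        - D + (2 * complex_of_real \<sigma> * (X11 x - X22 x) + 2 * X12 x ^ 2) * Y x
          = lam * complex_of_real \<sigma> * Y x)"
      using hyp d0 R1 R2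
      by (intro side_ode[where ps=psF and ?L1.0="Lam1 \<alpha> \<mu> g" and ?L2.0="Lam2 \<alpha> \<mu> g" and S="SM \<alpha> \<mu> g"
          and ?y1.0="\<lambda>t. yv s h t $ 1" and ?y2.0="\<lambda>t. yv s h t $ 2" and A=Ar and R=R]) 
         (auto simp: psF_def[abs_def] Y_def[abs_def] X11_def[abs_def] X12_def[abs_def] X22_def[abs_def] d1f_def[abs_def])
    then obtain D where dY: "(Y has_vector_derivative d1f \<sigma> x) (at x)"
      and dD: "(d1f \<sigma> has_vector_derivative D) (at x)"
      and eqD: "- D + (2 * complex_of_real \<sigma> * (X11 x - X22 x) + 2 * X12 x ^ 2) * Y x
          = lam * complex_of_real \<sigma> * Y x" by blast
    define I where "I = (if 0 < x then {0<..} else {..<(0::real)})"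
    have oI: "open I" by (simp add: I_def)
    have xI: "x \<in> I" using x0 by (auto simp: I_def)
    have eqI: "\<And>t. t \<in> I \<Longrightarrow> d1f \<sigma> t = d1 t"
      using x0 by (auto simp: I_def d1_def \<sigma>_def split: if_splits)
    have d1x: "d1 x = d1f \<sigma> x" by (simp add: d1_def \<sigma>_def)
    have dd1: "(d1 has_vector_derivative D) (at x)"
      by (rule has_vector_derivative_transform_within_open[OF dD oI xI eqI])
    have d2x: "d2 x = D" unfolding d2_def by (rule vector_derivative_at[OF dd1])
    have q: "qbreve \<alpha> \<mu> g x = 2 * complex_of_real \<sigma> * (X11 x - X22 x) + 2 * X12 x ^ 2"
      by (simp add: qbreve_def XM_11 XM_12 XM_22 X11_def X12_def X22_def \<sigma>_def)
    show ?thesis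
      using dY dd1 eqD unfolding ytilY d1x d2x q by (simp add: \<sigma>_def)
  qed
  show ?thesis
    by (rule exI[of _ d1], rule exI[of _ d2]) (use main in blast)
qed

end
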